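(* A point $\mathbf{x}\in\Delta^0$ is a global maximizer of the problem $\max\{f(\mathbf{x}):\mathbf{x}\in\Delta^0\}$ if and only if $\mathbf{x}=\mathbf{x}(C)$ for some maximum clique $C$ of $G$.
   Context: Let $G=(\mathcal{V},\mathcal{E})$ be a simple undirected graph on vertex set $\mathcal{V}=\{1,\dots,n\}$ with adjacency matrix $\mathbf{A}=(a_{ij})$ ($a_{ij}=1$ if $(i,j)\in\mathcal{E}$, else $0$; $a_{ii}=0$). A clique is a subset $C\subseteq\mathcal{V}$ with $(i,j)\in\mathcal{E}$ for all distinct $i,j\in C$; a maximum clique is one of largest cardinality. Let $\Delta=\{\mathbf{x}\in\mathbb{R}^n:\mathbf{0}\le\mathbf{x}\le\mathbf{1},\ \mathbf{1}^{\mathsf T}\mathbf{x}=1\}$, $\mathrm{supp}(\mathbf{x})=\{i:x_i\neq0\}$, and $\Delta^0=\{\mathbf{x}\in\Delta:\mathrm{supp}(\mathbf{x})\text{ is a clique}\}$. For a non-empty clique $C$, $\mathbf{x}(C)\in\Delta$ has $x(C)_i=1/|C|$ for $i\in C$ and $0$ otherwise. For $\mathbf{x}\in\Delta$, $\mathcal{P}(\mathbf{x})$ is the set of vectors in $\Delta$ obtained by permuting the coordinates of $\mathbf{x}$. Let $\Phi:X\to\mathbb{R}$ be twice continuously differentiable on an open set $X\supset\Delta$, satisfying for every $\mathbf{x}\in\Delta$: (C1) $\nabla^2\Phi(\mathbf{x})$ is positive semidefinite; (C2) $\|\nabla^2\Phi(\mathbf{x})\|_2<2$; (C3) $\Phi$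 is constant on $\mathcal{P}(\mathbf{x})$. Define $f(\mathbf{x})=\mathbf{x}^{\mathsf T}\mathbf{A}\mathbf{x}+\Phi(\mathbf{x})$. *)

theory Defs
  imports "HOL-Analysis.Analysis"
begin

text \<open>Vertices are the elements of a finite type 'n (standing for {1..n});
  the graph is given by a symmetric irreflexive edge relation E.\<close>

definition simple_graph :: "('n \<Rightarrow> 'n \<Rightarrow> bool) \<Rightarrow> bool" where
  "simple_graph E \<longleftrightarrow> (\<forall>i j. E i j \<longleftrightarrow> E j i) \<and> (\<forall>i. \<not> E i i)"

definition adj_matrix :: "('n::finite \<Rightarrow> 'n \<Rightarrow> bool) \<Rightarrow> real^'n^'n" where
  "adj_matrix E = (\<chi> i j. if E i j then 1 else 0)"

definition is_clique :: "('n \<Rightarrow> 'n \<Rightarrow> bool) \<Rightarrow> 'n set \<Rightarrow> bool" where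
  "is_clique E C \<longleftrightarrow> (\<forall>i\<in>C. \<forall>j\<in>C. i \<noteq> j \<longrightarrow> E i j)"

definition is_max_clique :: "('n::finite \<Rightarrow> 'n \<Rightarrow> bool) \<Rightarrow> 'n set \<Rightarrow> bool" where
  "is_max_clique E C \<longleftrightarrow> is_clique E C \<and> (\<forall>D. is_clique E D \<longrightarrow> card D \<le> card C)"

definition std_simplex :: "(real^'n::finite) set" where
  "std_simplex = {x. (\<forall>i. 0 \<le> x$i \<and> x$i \<le> 1) \<and> sum (\<lambda>i. x$i) UNIV = 1}"

definition supp :: "real^'n \<Rightarrow> 'n set" where
  "supp x = {i. x$i \<noteq> 0}"

definition std_simplex0 :: "('n::finite \<Rightarrow> 'n \<Rightarrow> bool) \<Rightarrow> (real^'n) set" where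
  "std_simplex0 E = {x \<in> std_simplex. is_clique E (supp x)}"

definition char_vec :: "'n::finite set \<Rightarrow> real^'n" where
  "char_vec C = (\<chi> i. if i \<in> C then 1 / real (card C) else 0)"

definition perms_of :: "real^'n::finite \<Rightarrow> (real^'n) set" where
  "perms_of x = {(\<chi> i. x $ (p i)) | p. p permutes (UNIV :: 'n set)}"

definition obj :: "('n::finite \<Rightarrow> 'n \<Rightarrow> bool) \<Rightarrow> (real^'n \<Rightarrow> real) \<Rightarrow> real^'n \<Rightarrow> real" where
  "obj E \<Phi> x = x \<bullet> (adj_matrix E *v x) + \<Phi> x"

end

theory Submission imports Defs "HOL-Combinatorics.Transposition" begin

lemma simplex_convex:
  assumes "y \<in> std_simplex" "z \<in> std_simplex" "0 \<le> t" "t \<le> (1::real)"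
  shows "y + t *\<^sub>R (z - y) \<in> (std_simplex :: (real^'n::finite) set)"
proof -
  have e: "y + t *\<^sub>R (z - y) = (1 - t) *\<^sub>R y + t *\<^sub>R z" by (simp add: algebra_simps)
  have "0 \<le> ((1 - t) *\<^sub>R y + t *\<^sub>R z) $ i \<and> ((1 - t) *\<^sub>R y + t *\<^sub>R z) $ i \<le> 1" for i
  proof -
    have a: "0 \<le> y$i" "y$i \<le> 1" "0 \<le> z$i" "z$i \<le> 1" using assms unfolding std_simplex_def by auto
    have "(1-t) * y$i + t * z$i \<le> (1-t) * 1 + t * 1"
      using a assms by (intro add_mono mult_left_mono) auto
    then show ?thesis using a assms by simp
  qed
  moreover have "(\<Sum>i\<in>UNIV. ((1 - t) *\<^sub>R y + t *\<^sub>R z) $ i) = 1"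
    using assms unfolding std_simplex_def by (simp add: sum.distrib sum_distrib_left[symmetric])
  ultimately show ?thesis unfolding e std_simplex_def by blast
qed

definition face :: "'n::finite set \<Rightarrow> (real^'n) set" where
  "face D = {y \<in> std_simplex. \<forall>i. i \<notin> D \<longrightarrow> y$i = 0}"

lemma face_convex:
  assumes "y \<in> face D" "z \<in> face D" "0 \<le> t" "t \<le> (1::real)"
  shows "y + t *\<^sub>R (z - y) \<in> face D"
  using simplex_convex[of y z t] assms unfolding face_def by auto

lemma compact_face: "compact (face D)"
unfolding compact_eq_bounded_closed proof
  have "face D \<subseteq> cbox 0 (\<chi> i. 1)" unfolding face_def std_simplex_def by (auto simp: mem_box_cart)
  then show "bounded (face D)" using bounded_cbox bounded_subset by blast
  have "face D = (\<Inter>i. {y. 0 \<le> y$i}) \<inter> (\<Inter>i. {y. y$i \<le> 1}) \<inter> {y. (\<Sum>i\<in>UNIV. y$i) = 1}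
      \<inter> (\<Inter>i\<in>-D. {y. y$i = 0})"
    unfolding face_def std_simplex_def by auto
  moreover have "closed \<dots>"
    by (intro closed_Int closed_INT ballI closed_Collect_le closed_Collect_eq continuous_intros)
  ultimately show "closed (face D)" by simp
qed

lemma sum_if_const: "(\<Sum>i\<in>(UNIV::'n::finite set). if i \<in> D then c else 0) = real (card D) * c"
  by (simp add: sum.If_cases)

lemma char_vec_simplex:
  assumes "D \<noteq> {}" shows "char_vec D \<in> face (D :: 'n::finite set)"
proof -
  have c: "card D \<ge> 1" using assms by (simp add: Suc_le_eq card_gt_0_iff)
  then show ?thesis unfolding face_def std_simplex_def char_vec_def
    by (auto simp: sum_if_const)
qed

lemma supp_char_vec: "D \<noteq> {} \<Longrightarrow> supp (char_vec (D::'n::finite set)) = D"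
  unfolding supp_def char_vec_def by (auto simp: card_gt_0_iff)

lemma perm_exists:
  fixes D C :: "'n::finite set"
  assumes "card D = card C"
  obtains p where "p permutes UNIV" "\<And>i. p i \<in> C \<longleftrightarrow> i \<in> D"
proof -
  obtain f where f: "bij_betw f D C" using finite_same_card_bij[OF finite finite assms] by blast
  have "card (UNIV - D) = card (UNIV - C)"
    using assms card_Diff_subset[OF finite subset_UNIV, of D] card_Diff_subset[OF finite subset_UNIV, of C]
    by simp
  then obtain h where h: "bij_betw h (UNIV - D) (UNIV - C)"
    using finite_same_card_bij[OF finite finite] by blast
  define p where "p i = (if i \<in> D then f i else h i)" for i
  have "bij_betw p D C \<longleftrightarrow> bij_betw f D C" by (rule bij_betw_cong) (simp add: p_def)
  with f have 1: "bij_betw p D C" by simp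
  have "bij_betw p (UNIV - D) (UNIV - C) \<longleftrightarrow> bij_betw h (UNIV - D) (UNIV - C)"
    by (rule bij_betw_cong) (simp add: p_def)
  with h have 2: "bij_betw p (UNIV - D) (UNIV - C)" by simp
  have "bij_betw p (D \<union> (UNIV - D)) (C \<union> (UNIV - C))"
    using bij_betw_combine[OF 1 2] by blast
  then have b: "bij_betw p UNIV UNIV" by simp
  have pp: "p permutes UNIV" using b by (rule bij_imp_permutes) simp
  have "p i \<in> C \<longleftrightarrow> i \<in> D" for i
  proof (cases "i \<in> D")
    case True then show ?thesis using bij_betwE[OF 1] by blast
  next
    case False then have "p i \<in> UNIV - C" using bij_betwE[OF 2] by blast
    then show ?thesis using False by blast
  qed
  then show ?thesis using that pp by blast
qed

lemma inner_perm:
  fixes y :: "real^'n::finite"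
  assumes "p permutes UNIV"
  shows "(\<chi> i. y $ p i) \<bullet> (\<chi> i. y $ p i) = y \<bullet> y"
    and "(\<Sum>i\<in>UNIV. (\<chi> i. y $ p i) $ i) = (\<Sum>i\<in>UNIV. y $ i)"
proof -
  have i: "inj p" and s: "p ` UNIV = UNIV" using assms permutes_inj permutes_surj by blast+
  show "(\<chi> i. y $ p i) \<bullet> (\<chi> i. y $ p i) = y \<bullet> y"
    unfolding inner_vec_def using sum.reindex[OF i, of "\<lambda>i. y$i \<bullet> y$i"] s by simp
  show "(\<Sum>i\<in>UNIV. (\<chi> i. y $ p i) $ i) = (\<Sum>i\<in>UNIV. y $ i)"
    using sum.reindex[OF i, of "\<lambda>i. y$i"] s by simp
qed

lemma obj_eq:
  assumes graph: "simple_graph E" and y: "y \<in> std_simplex0 E"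
  shows "obj E \<Phi> y = 1 - y \<bullet> y + \<Phi> y"
proof -
  have ys: "y \<in> std_simplex" and cl: "is_clique E (supp y)" using y unfolding std_simplex0_def by auto
  have t: "y$i * ((if E i j then 1 else 0) * y$j) = (if i = j then 0 else y$i * y$j)" for i j
    using graph cl unfolding simple_graph_def is_clique_def supp_def by auto
  have "y \<bullet> (adj_matrix E *v y) = (\<Sum>i\<in>UNIV. \<Sum>j\<in>UNIV. y$i * ((if E i j then 1 else 0) * y$j))"
    unfolding inner_vec_def matrix_vector_mult_def adj_matrix_def by (simp add: sum_distrib_left)
  also have "\<dots> = (\<Sum>i\<in>UNIV. \<Sum>j\<in>UNIV. y$i * y$j - (if i = j then y$i * y$j else 0))"
    unfolding t by (intro sum.cong) auto
  also have "\<dots> = (\<Sum>i\<in>UNIV. y$i) * (\<Sum>j\<in>UNIV. y$j) - (\<Sum>i\<in>UNIV. y$i * y$i)"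
    by (simp add: sum_subtractf sum_product)
  also have "\<dots> = 1 - y \<bullet> y" using ys unfolding std_simplex_def inner_vec_def by simp
  finally show ?thesis unfolding obj_def by simp
qed

context
  fixes \<Phi> :: "real^'n::finite \<Rightarrow> real"
    and g :: "real^'n \<Rightarrow> real^'n"
    and H :: "real^'n \<Rightarrow> real^'n^'n"
    and X :: "(real^'n) set"
  assumes X_sup: "std_simplex \<subseteq> X"
    and grad: "\<And>y. y \<in> X \<Longrightarrow> (\<Phi> has_derivative (\<lambda>h. g y \<bullet> h)) (at y)"
    and hess: "\<And>y. y \<in> X \<Longrightarrow> (g has_derivative (\<lambda>h. H y *v h)) (at y)"
    and C2: "\<And>y. y \<in> std_simplex \<Longrightarrow> onorm (\<lambda>v. H y *v v) < 2"
    and C3: "\<And>y z. y \<in> std_simplex \<Longrightarrow> z \<in> perms_of y \<Longrightarrow> \<Phi> z = \<Phi> y"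
begin

lemma taylor_bound:
  assumes y: "y \<in> std_simplex" and z: "z \<in> std_simplex" and ne: "y \<noteq> z"
  shows "\<Phi> z - \<Phi> y - g y \<bullet> (z - y) < (z - y) \<bullet> (z - y)"
proof -
  define d where "d = z - y"
  define p where "p t = y + t *\<^sub>R d" for t :: real
  define diff where "diff m = (if m = 0 then (\<lambda>t. \<Phi> (p t)) else if m = 1 then (\<lambda>t. g (p t) \<bullet> d)
      else (\<lambda>t. (H (p t) *v d) \<bullet> d))" for m :: nat
  have pX: "p t \<in> X" if "0 \<le> t" "t \<le> 1" for t
    using simplex_convex[OF y z that] X_sup unfolding p_def d_def by auto
  have dp: "(p has_derivative (\<lambda>s. s *\<^sub>R d)) (at t)" for t
    unfolding p_def by (auto intro!: derivative_eq_intros)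
  have D: "DERIV (diff m) t :> diff (Suc m) t" if "m < 2" "0 \<le> t" "t \<le> 1" for m t
  proof -
    have "m = 0 \<or> m = 1" using that by auto
    then show ?thesis
    proof
      assume m: "m = 0"
      have "((\<lambda>t. \<Phi> (p t)) has_derivative (\<lambda>s. g (p t) \<bullet> (s *\<^sub>R d))) (at t)"
        using has_derivative_compose[OF dp grad[OF pX[OF that(2,3)]]] by (simp add: o_def)
      moreover have "(\<lambda>s. g (p t) \<bullet> (s *\<^sub>R d)) = (*) (g (p t) \<bullet> d)"
        by (auto simp: fun_eq_iff inner_scaleR_right)
      ultimately show ?thesis unfolding m diff_def has_field_derivative_def by simp
    next
      assume m: "m = 1"
      have "(g \<circ> p has_derivative (\<lambda>s. H (p t) *v (s *\<^sub>R d))) (at t)"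
        using has_derivative_compose[OF dp hess[OF pX[OF that(2,3)]]] by (simp add: o_def)
      then have "((\<lambda>t. g (p t) \<bullet> d) has_derivative (\<lambda>s. (H (p t) *v (s *\<^sub>R d)) \<bullet> d)) (at t)"
        using has_derivative_inner_left by (fastforce simp: o_def)
      moreover have "(\<lambda>s. (H (p t) *v (s *\<^sub>R d)) \<bullet> d) = (*) ((H (p t) *v d) \<bullet> d)"
        by (auto simp: fun_eq_iff matrix_vector_mult_scaleR inner_scaleR_left)
      ultimately show ?thesis unfolding m diff_def has_field_derivative_def by simp
    qed
  qed
  obtain t where t: "0 < t" "t < 1" and eq: "diff 0 1 = (\<Sum>m<2. diff m 0 / fact m * 1 ^ m) + diff 2 t / fact 2 * 1 ^ 2"
    using Maclaurin[of 1 2 diff "diff 0"] D by auto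
  have eq2: "\<Phi> z = \<Phi> y + g y \<bullet> d + (H (p t) *v d) \<bullet> d / 2"
    using eq by (simp add: diff_def p_def d_def numeral_2_eq_2)
  have pt: "p t \<in> std_simplex" using simplex_convex[OF y z, of t] t unfolding p_def d_def by auto
  have "(H (p t) *v d) \<bullet> d \<le> norm (H (p t) *v d) * norm d" by (rule norm_cauchy_schwarz)
  also have "\<dots> \<le> onorm (\<lambda>v. H (p t) *v v) * norm d * norm d"
    by (intro mult_right_mono onorm) auto
  also have "\<dots> < 2 * norm d * norm d"
  proof -
    have "norm d > 0" using ne unfolding d_def by auto
    then show ?thesis using C2[OF pt] by simp
  qed
  finally have "(H (p t) *v d) \<bullet> d < 2 * (d \<bullet> d)"
    by (simp add: power2_norm_eq_inner[symmetric] power2_eq_square)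
  then show ?thesis using eq2 unfolding d_def by simp
qed

lemma concave_strict:
  assumes y: "y \<in> std_simplex" and z: "z \<in> std_simplex" and ne: "y \<noteq> z"
  shows "\<Phi> z - z \<bullet> z < \<Phi> y - y \<bullet> y + (g y - 2 *\<^sub>R y) \<bullet> (z - y)"
proof -
  have "z \<bullet> z - y \<bullet> y - (2 *\<^sub>R y) \<bullet> (z - y) = (z - y) \<bullet> (z - y)"
    by (simp add: inner_diff_left inner_diff_right inner_commute)
  then show ?thesis using taylor_bound[OF y z ne] by (simp add: inner_diff_left)
qed

lemma midpoint_strict:
  assumes y: "y \<in> std_simplex" and z: "z \<in> std_simplex" and ne: "y \<noteq> z"
  shows "(\<Phi> y - y \<bullet> y) + (\<Phi> z - z \<bullet> z) < 2 * (\<Phi> (y + (1/2) *\<^sub>R (z - y)) - (y + (1/2) *\<^sub>R (z - y)) \<bullet> (y + (1/2) *\<^sub>R (z - y)))"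
proof -
  define m where "m = y + (1/2) *\<^sub>R (z - y)"
  have m: "m \<in> std_simplex" unfolding m_def by (rule simplex_convex[OF y z]) auto
  have "m \<noteq> y" using ne unfolding m_def by auto
  moreover have "m \<noteq> z"
  proof
    assume "m = z"
    then have "y = z" unfolding m_def vec_eq_iff by (auto simp: field_simps)
    then show False using ne by simp
  qed
  ultimately have a: "\<Phi> y - y \<bullet> y < \<Phi> m - m \<bullet> m + (g m - 2 *\<^sub>R m) \<bullet> (y - m)"
    and b: "\<Phi> z - z \<bullet> z < \<Phi> m - m \<bullet> m + (g m - 2 *\<^sub>R m) \<bullet> (z - m)"
    using concave_strict[OF m y] concave_strict[OF m z] by auto
  have "(y - m) + (z - m) = 0" unfolding m_def vec_eq_iff by (simp add: field_simps)
  then have "(g m - 2 *\<^sub>R m) \<bullet> (y - m) + (g m - 2 *\<^sub>R m) \<bullet> (z - m) = 0"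
    by (metis inner_right_distrib inner_zero_right)
  with a b have "(\<Phi> y - y \<bullet> y) + (\<Phi> z - z \<bullet> z) < 2 * (\<Phi> m - m \<bullet> m)" by (smt (verit))
  then show ?thesis unfolding m_def .
qed

lemma face_max:
  fixes D :: "'n set"
  assumes D: "D \<noteq> {}" and y: "y \<in> face D"
  shows "\<Phi> y - y \<bullet> y \<le> \<Phi> (char_vec D) - char_vec D \<bullet> char_vec D"
    and "\<Phi> y - y \<bullet> y = \<Phi> (char_vec D) - char_vec D \<bullet> char_vec D \<Longrightarrow> y = char_vec D"
proof -
  define \<psi> where "\<psi> w = \<Phi> w - w \<bullet> w" for w
  have cont: "continuous_on (face D) \<psi>"
  proof -
    have "continuous_on X \<Phi>"
      using grad has_derivative_continuous continuous_at_imp_continuous_on by blast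
    moreover have "face D \<subseteq> X" using X_sup unfolding face_def by auto
    ultimately have "continuous_on (face D) \<Phi>" using continuous_on_subset by blast
    then show ?thesis unfolding \<psi>_def by (intro continuous_intros)
  qed
  obtain m where m: "m \<in> face D" and mmax: "\<And>w. w \<in> face D \<Longrightarrow> \<psi> w \<le> \<psi> m"
    using continuous_attains_sup[OF compact_face _ cont] char_vec_simplex[OF D] by blast
  have uniq: "w = m" if w: "w \<in> face D" "\<psi> w = \<psi> m" for w
  proof (rule ccontr)
    assume ne: "w \<noteq> m"
    have ws: "w \<in> std_simplex" "m \<in> std_simplex" using w m unfolding face_def by auto
    have "w + (1/2) *\<^sub>R (m - w) \<in> face D" by (rule face_convex[OF w(1) m]) auto
    then have "\<psi> (w + (1/2) *\<^sub>R (m - w)) \<le> \<psi> m" by (rule mmax)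
    moreover have "\<psi> w + \<psi> m < 2 * \<psi> (w + (1/2) *\<^sub>R (m - w))"
      using midpoint_strict[OF ws ne] unfolding \<psi>_def .
    ultimately show False using w(2) by linarith
  qed
  have sym: "m $ i = m $ j" if ij: "i \<in> D" "j \<in> D" for i j
  proof -
    define m' where "m' = (\<chi> k. m $ (Transposition.transpose i j k))"
    have pp: "Transposition.transpose i j permutes UNIV" by (rule permutes_swap_id) auto
    have ms: "m \<in> std_simplex" using m unfolding face_def by auto
    have "m' \<in> perms_of m" unfolding perms_of_def m'_def using pp by blast
    then have e1: "\<Phi> m' = \<Phi> m" using C3[OF ms] by blast
    have e2: "m' \<bullet> m' = m \<bullet> m" unfolding m'_def by (rule inner_perm(1)[OF pp])
    have e3: "(\<Sum>k\<in>UNIV. m' $ k) = 1"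
      using inner_perm(2)[OF pp, of m] ms unfolding m'_def std_simplex_def by simp
    have "m' \<in> face D"
      using m ij e3 unfolding face_def std_simplex_def m'_def
      by (auto simp: Transposition.transpose_def)
    moreover have "\<psi> m' = \<psi> m" unfolding \<psi>_def using e1 e2 by simp
    ultimately have "m' = m" by (rule uniq)
    then have "m' $ i = m $ i" by simp
    then show ?thesis unfolding m'_def by simp
  qed
  obtain d0 where d0: "d0 \<in> D" using D by blast
  define c where "c = m $ d0"
  have mc: "m $ k = (if k \<in> D then c else 0)" for k
    using m sym[OF _ d0] unfolding c_def face_def by auto
  have "(\<Sum>k\<in>UNIV. m $ k) = 1" using m unfolding face_def std_simplex_def by auto
  then have "real (card D) * c = 1" unfolding mc sum_if_const .
  moreover have "card D > 0" using D by (simp add: card_gt_0_iff)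
  ultimately have "c = 1 / real (card D)" by (auto simp: eq_divide_eq mult.commute)
  then have mD: "m = char_vec D" unfolding char_vec_def vec_eq_iff using mc by simp
  show "\<Phi> y - y \<bullet> y \<le> \<Phi> (char_vec D) - char_vec D \<bullet> char_vec D"
    using mmax[OF y] unfolding \<psi>_def mD .
  show "\<Phi> y - y \<bullet> y = \<Phi> (char_vec D) - char_vec D \<bullet> char_vec D \<Longrightarrow> y = char_vec D"
    using uniq[OF y] unfolding \<psi>_def mD by blast
qed

lemma same_card:
  fixes D C :: "'n set"
  assumes D: "D \<noteq> {}" and c: "card D = card C"
  shows "\<Phi> (char_vec D) - char_vec D \<bullet> char_vec D = \<Phi> (char_vec C) - char_vec C \<bullet> char_vec C"
proof -
  obtain p where pp: "p permutes UNIV" and pC: "\<And>i. p i \<in> C \<longleftrightarrow> i \<in> D"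
    using perm_exists[OF c] by blast
  have C: "C \<noteq> {}" using D c by auto
  have e: "char_vec D = (\<chi> i. char_vec C $ p i)"
    unfolding char_vec_def vec_eq_iff using pC c by simp
  have Cs: "char_vec C \<in> std_simplex" using char_vec_simplex[OF C] unfolding face_def by auto
  have "char_vec D \<in> perms_of (char_vec C)" unfolding perms_of_def e using pp by blast
  then have "\<Phi> (char_vec D) = \<Phi> (char_vec C)" using C3[OF Cs] by blast
  moreover have "char_vec D \<bullet> char_vec D = char_vec C \<bullet> char_vec C"
    unfolding e by (rule inner_perm(1)[OF pp])
  ultimately show ?thesis by simp
qed

lemma card_strict:
  fixes S C :: "'n set"
  assumes S: "S \<noteq> {}" and c: "card S < card C"
  shows "\<Phi> (char_vec S) - char_vec S \<bullet> char_vec S < \<Phi> (char_vec C) - char_vec C \<bullet> char_vec C"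
proof -
  have "card C \<le> card (UNIV :: 'n set)" by (rule card_mono) auto
  then have "card C - card S \<le> card (UNIV - S)"
    using card_Diff_subset[OF finite subset_UNIV, of S] by simp
  then obtain T where T: "T \<subseteq> UNIV - S" "card T = card C - card S" "finite T"
    by (rule obtain_subset_with_card_n)
  define D where "D = S \<union> T"
  have cD: "card D = card C" unfolding D_def using T c
    by (subst card_Un_disjoint) auto
  have DS: "D \<noteq> {}" using S unfolding D_def by auto
  have "card T > 0" using T c by simp
  then obtain k where k: "k \<in> T" by (metis card.empty all_not_in_conv less_irrefl)
  have kS: "k \<notin> S" using T k by auto
  have "char_vec S \<in> face D" using char_vec_simplex[OF S] unfolding face_def D_def by auto
  moreover have "char_vec S \<noteq> char_vec D"
  proof
    assume "char_vec S = char_vec D"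
    then have "char_vec S $ k = char_vec D $ k" by simp
    moreover have "card D > 0" using DS by (simp add: card_gt_0_iff)
    ultimately show False using k kS unfolding char_vec_def D_def by simp
  qed
  ultimately have "\<Phi> (char_vec S) - char_vec S \<bullet> char_vec S < \<Phi> (char_vec D) - char_vec D \<bullet> char_vec D"
    using face_max[OF DS] by fastforce
  then show ?thesis using same_card[OF DS cD] by simp
qed

end

theorem corollary1:
  fixes E :: "'n::finite \<Rightarrow> 'n \<Rightarrow> bool"
    and \<Phi> :: "real^'n \<Rightarrow> real"
    and g :: "real^'n \<Rightarrow> real^'n"
    and H :: "real^'n \<Rightarrow> real^'n^'n"
    and X :: "(real^'n) set"
    and x :: "real^'n"
  assumes graph: "simple_graph E"
    and X_open: "open X" and X_sup: "std_simplex \<subseteq> X"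
    and grad: "\<And>y. y \<in> X \<Longrightarrow> (\<Phi> has_derivative (\<lambda>h. g y \<bullet> h)) (at y)"
    and hess: "\<And>y. y \<in> X \<Longrightarrow> (g has_derivative (\<lambda>h. H y *v h)) (at y)"
    and hess_cont: "continuous_on X H"
    and C1: "\<And>y v. y \<in> std_simplex \<Longrightarrow> 0 \<le> v \<bullet> (H y *v v)"
    and C2: "\<And>y. y \<in> std_simplex \<Longrightarrow> onorm (\<lambda>v. H y *v v) < 2"
    and C3: "\<And>y z. y \<in> std_simplex \<Longrightarrow> z \<in> perms_of y \<Longrightarrow> \<Phi> z = \<Phi> y"
    and x_in: "x \<in> std_simplex0 E"
  shows "(\<forall>y \<in> std_simplex0 E. obj E \<Phi> y \<le> obj E \<Phi> x) \<longleftrightarrow>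
         (\<exists>C. is_max_clique E C \<and> x = char_vec C)"
proof -
  define \<psi> where "\<psi> w = \<Phi> w - w \<bullet> w" for w
  have fm1: "\<Phi> y - y \<bullet> y \<le> \<Phi> (char_vec D) - char_vec D \<bullet> char_vec D"
    if "D \<noteq> {}" "y \<in> face D" for D y
    by (rule face_max(1)[OF X_sup grad hess C2 C3 that]) auto
  have fm2: "y = char_vec D"
    if "D \<noteq> {}" "y \<in> face D" "\<Phi> y - y \<bullet> y = \<Phi> (char_vec D) - char_vec D \<bullet> char_vec D" for D y
    by (rule face_max(2)[OF X_sup grad hess C2 C3 that]) auto
  have sc: "\<Phi> (char_vec D) - char_vec D \<bullet> char_vec D = \<Phi> (char_vec C) - char_vec C \<bullet> char_vec C"
    if "D \<noteq> {}" "card D = card C" for D C :: "'n set"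
    by (rule same_card[OF X_sup grad hess C2 C3 that]) auto
  have cs: "\<Phi> (char_vec S) - char_vec S \<bullet> char_vec S < \<Phi> (char_vec C) - char_vec C \<bullet> char_vec C"
    if "S \<noteq> {}" "card S < card C" for S C :: "'n set"
    by (rule card_strict[OF X_sup grad hess C2 C3 that]) auto
  have objeq: "obj E \<Phi> y = 1 + \<psi> y" if "y \<in> std_simplex0 E" for y
    using obj_eq[OF graph that] unfolding \<psi>_def by simp
  have supp_ne: "supp y \<noteq> {}" if "y \<in> std_simplex" for y :: "real^'n"
  proof
    assume "supp y = {}"
    then have "\<And>i. y $ i = 0" unfolding supp_def by auto
    then show False using that unfolding std_simplex_def by simp
  qed
  have in_face: "y \<in> face (supp y)" if "y \<in> std_simplex" for y :: "real^'n"
    using that unfolding face_def supp_def by auto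
  have cv0: "char_vec S \<in> std_simplex0 E" if "S \<noteq> {}" "is_clique E S" for S
    using char_vec_simplex[OF that(1)] supp_char_vec[OF that(1)] that(2)
    unfolding std_simplex0_def face_def by auto
  have bound: "\<psi> y \<le> \<psi> (char_vec C)" if y: "y \<in> std_simplex0 E" and C: "is_max_clique E C" for y C
  proof -
    have ys: "y \<in> std_simplex" and cl: "is_clique E (supp y)" using y unfolding std_simplex0_def by auto
    have ne: "supp y \<noteq> {}" by (rule supp_ne[OF ys])
    have "\<psi> y \<le> \<psi> (char_vec (supp y))" using fm1[OF ne in_face[OF ys]] unfolding \<psi>_def .
    moreover have "card (supp y) \<le> card C" using C cl unfolding is_max_clique_def by auto
    then have "\<psi> (char_vec (supp y)) \<le> \<psi> (char_vec C)"
      using cs[OF ne, of C] sc[OF ne, of C] unfolding \<psi>_def by force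
    ultimately show ?thesis by simp
  qed
  define K where "K = {D :: 'n set. is_clique E D}"
  have fK: "finite K" by simp
  have "{} \<in> K" unfolding K_def is_clique_def by simp
  then have neK: "card ` K \<noteq> {}" by blast
  obtain C0 where C0: "C0 \<in> K" "card C0 = Max (card ` K)" using Max_in[OF _ neK] fK by force
  have C0max: "is_max_clique E C0"
    unfolding is_max_clique_def using C0 Max_ge[of "card ` K"] fK unfolding K_def by auto
  have xs: "x \<in> std_simplex" and xcl: "is_clique E (supp x)" using x_in unfolding std_simplex0_def by auto
  have xne: "supp x \<noteq> {}" by (rule supp_ne[OF xs])
  have C0ne: "C0 \<noteq> {}"
  proof -
    have "card (supp x) \<le> card C0" using C0max xcl unfolding is_max_clique_def by auto
    moreover have "card (supp x) > 0" using xne by (simp add: card_gt_0_iff)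
    ultimately show ?thesis by auto
  qed
  show ?thesis
  proof
    assume maxx: "\<forall>y \<in> std_simplex0 E. obj E \<Phi> y \<le> obj E \<Phi> x"
    define S where "S = supp x"
    have "obj E \<Phi> (char_vec C0) \<le> obj E \<Phi> x"
      using maxx cv0[OF C0ne] C0max unfolding is_max_clique_def by auto
    then have a: "\<psi> (char_vec C0) \<le> \<psi> x"
      using objeq[OF x_in] objeq[OF cv0[OF C0ne]] C0max unfolding is_max_clique_def by auto
    have b: "\<psi> x \<le> \<psi> (char_vec S)" using fm1[OF xne in_face[OF xs]] unfolding \<psi>_def S_def .
    have cle: "card S \<le> card C0" using C0max xcl unfolding is_max_clique_def S_def by auto
    have ceq: "card S = card C0"
    proof (rule ccontr)
      assume "card S \<noteq> card C0"
      then have "card S < card C0" using cle by simp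
      then have "\<psi> (char_vec S) < \<psi> (char_vec C0)" using cs[OF xne[folded S_def]] unfolding \<psi>_def by blast
      then show False using a b by simp
    qed
    have "\<psi> (char_vec S) = \<psi> (char_vec C0)" using sc[OF xne[folded S_def] ceq] unfolding \<psi>_def .
    then have "\<psi> x = \<psi> (char_vec S)" using a b by simp
    then have xS: "x = char_vec S" using fm2[OF xne in_face[OF xs]] unfolding \<psi>_def S_def by blast
    have "is_max_clique E S"
      using C0max xcl ceq unfolding is_max_clique_def S_def by auto
    then show "\<exists>C. is_max_clique E C \<and> x = char_vec C" using xS by blast
  next
    assume "\<exists>C. is_max_clique E C \<and> x = char_vec C"
    then obtain C where C: "is_max_clique E C" and xC: "x = char_vec C" by blast
    show "\<forall>y \<in> std_simplex0 E. obj E \<Phi> y \<le> obj E \<Phi> x"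
    proof
      fix y assume y: "y \<in> std_simplex0 E"
      show "obj E \<Phi> y \<le> obj E \<Phi> x"
        using bound[OF y C] objeq[OF y] objeq[OF x_in] xC by simp
    qed
  qed
qed

end
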